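(* Let $X\neq\emptyset$ be countable, $F=(F_x)_{x\in X}$ a family of finite-dimensional complex vector spaces, and $A\colon\Gamma(X;F)\to\Gamma(X;F)$ a continuous linear operator whose dual operator $A'\colon\Gamma_c(X;F')\to\Gamma_c(X;F')$ is injective. Then for every finite nonempty $K\subseteq X$ there exist $\varepsilon>0$ and a finite nonempty $K'\subseteq X$ such that $A(U_K)\supseteq\varepsilon U_{K'}$.
   Context: $\Gamma(X;F)=\prod_x F_x$ carries the product topology, i.e. the topology generated by seminorms $p_K(f)=\sum_{x\in K}\|f(x)\|_x$ for finite $K\subseteq X$, with $\|\cdot\|_x$ a fixed norm on $F_x$. $U_K:=\{f\in\Gamma(X;F)\mid p_K(f)\le1\}$. $\Gamma_c(X;F')$ is the space of finitely supported sections of the dual bundle $F'=(F'_x)$, identified with the continuous dual of $\Gamma(X;F)$ via $(\varphi,f)=\sum_x\varphi(x)(f(x))$; the dual operator is defined by $(A'\varphi,f)=(\varphi,Af)$. *)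

theory Defs
  imports "HOL-Analysis.Analysis" "HOL-Library.Countable"
begin

text \<open>
  Model: the finite-dimensional complex vector space F_x of dimension d x is
  represented as the coordinate space of vectors v :: nat \<Rightarrow> complex
  with v i = 0 for i \<ge> d x.
  The product topology on Gamma is the subspace topology of the product
  (function) topology on 'x \<Rightarrow> nat \<Rightarrow> complex.
  The dual space F_x' is represented by coefficient vectors
  (phi x :: nat \<Rightarrow> complex, zero beyond d x), acting by
  v \<mapsto> sum_{i<d x} phi x i * v i.
\<close>

definition fibre :: "('x \<Rightarrow> nat) \<Rightarrow> 'x \<Rightarrow> (nat \<Rightarrow> complex) set" where
  "fibre d x = {v. \<forall>i\<ge>d x. v i = 0}"

definition sections :: "('x \<Rightarrow> nat) \<Rightarrow> ('x \<Rightarrow> nat \<Rightarrow> complex) set" where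
  "sections d = {f. \<forall>x. f x \<in> fibre d x}"

definition csections_dual :: "('x \<Rightarrow> nat) \<Rightarrow> ('x \<Rightarrow> nat \<Rightarrow> complex) set" where
  "csections_dual d = {phi. (\<forall>x. phi x \<in> fibre d x) \<and> finite {x. phi x \<noteq> (\<lambda>_. 0)}}"

definition pairing :: "('x \<Rightarrow> nat) \<Rightarrow> ('x \<Rightarrow> nat \<Rightarrow> complex) \<Rightarrow> ('x \<Rightarrow> nat \<Rightarrow> complex) \<Rightarrow> complex" where
  "pairing d phi f = (\<Sum>x\<in>{x. phi x \<noteq> (\<lambda>_. 0)}. \<Sum>i<d x. phi x i * f x i)"

definition dual_op :: "('x \<Rightarrow> nat) \<Rightarrow> (('x \<Rightarrow> nat \<Rightarrow> complex) \<Rightarrow> ('x \<Rightarrow> nat \<Rightarrow> complex))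
     \<Rightarrow> ('x \<Rightarrow> nat \<Rightarrow> complex) \<Rightarrow> ('x \<Rightarrow> nat \<Rightarrow> complex)" where
  "dual_op d A phi = (THE psi. psi \<in> csections_dual d \<and>
      (\<forall>f\<in>sections d. pairing d psi f = pairing d phi (A f)))"

definition linear_on_sections :: "('x \<Rightarrow> nat) \<Rightarrow> (('x \<Rightarrow> nat \<Rightarrow> complex) \<Rightarrow> ('x \<Rightarrow> nat \<Rightarrow> complex)) \<Rightarrow> bool" where
  "linear_on_sections d A \<longleftrightarrow>
     (\<forall>f\<in>sections d. \<forall>g\<in>sections d. A (\<lambda>x i. f x i + g x i) = (\<lambda>x i. A f x i + A g x i)) \<and>
     (\<forall>c. \<forall>f\<in>sections d. A (\<lambda>x i. c * f x i) = (\<lambda>x i. c * A f x i))"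

definition is_norm_on :: "(nat \<Rightarrow> complex) set \<Rightarrow> ((nat \<Rightarrow> complex) \<Rightarrow> real) \<Rightarrow> bool" where
  "is_norm_on V N \<longleftrightarrow>
     (\<forall>v\<in>V. 0 \<le> N v) \<and>
     (\<forall>v\<in>V. N v = 0 \<longleftrightarrow> v = (\<lambda>_. 0)) \<and>
     (\<forall>c. \<forall>v\<in>V. N (\<lambda>i. c * v i) = cmod c * N v) \<and>
     (\<forall>v\<in>V. \<forall>w\<in>V. N (\<lambda>i. v i + w i) \<le> N v + N w)"

definition seminorm_K :: "(('x \<Rightarrow> (nat \<Rightarrow> complex) \<Rightarrow> real)) \<Rightarrow> 'x set \<Rightarrow> ('x \<Rightarrow> nat \<Rightarrow> complex) \<Rightarrow> real" where
  "seminorm_K N K f = (\<Sum>x\<in>K. N x (f x))"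

definition U_ball :: "('x \<Rightarrow> nat) \<Rightarrow> ('x \<Rightarrow> (nat \<Rightarrow> complex) \<Rightarrow> real) \<Rightarrow> 'x set \<Rightarrow> ('x \<Rightarrow> nat \<Rightarrow> complex) set" where
  "U_ball d N K = {f\<in>sections d. seminorm_K N K f \<le> 1}"

definition scale_sec :: "real \<Rightarrow> ('x \<Rightarrow> nat \<Rightarrow> complex) \<Rightarrow> ('x \<Rightarrow> nat \<Rightarrow> complex)" where
  "scale_sec e f = (\<lambda>x i. complex_of_real e * f x i)"

end

theory Submission
  imports Defs "HOL-Library.Function_Algebras"
begin

type_synonym 'x sec = "'x \<Rightarrow> nat \<Rightarrow> complex"

definition scl :: "complex \<Rightarrow> 'x sec \<Rightarrow> 'x sec" where
  "scl c f = (\<lambda>x i. c * f x i)"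

definition dl :: "'x \<Rightarrow> nat \<Rightarrow> 'x sec" where
  "dl x i = (\<lambda>y j. if y = x \<and> j = i then 1 else 0)"

definition supp :: "'x sec \<Rightarrow> 'x set" where
  "supp phi = {x. phi x \<noteq> (\<lambda>_. 0)}"

interpretation vs: vector_space "scl :: complex \<Rightarrow> 'x sec \<Rightarrow> 'x sec"
  by unfold_locales (auto simp: scl_def fun_eq_iff algebra_simps)

lemma sum_sec_apply: "(\<Sum>k\<in>I. (F k :: 'x sec)) x i = (\<Sum>k\<in>I. F k x i)"
  by (induction I rule: infinite_finite_induct) auto

lemma sum_fn_apply: "(\<Sum>k\<in>I. (F k :: nat \<Rightarrow> complex)) i = (\<Sum>k\<in>I. F k i)"
  by (induction I rule: infinite_finite_induct) auto

lemma tendsto_fun_iff: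
  fixes f :: "'a \<Rightarrow> 'i \<Rightarrow> 'b::topological_space"
  shows "(f \<longlongrightarrow> l) F \<longleftrightarrow> (\<forall>i. ((\<lambda>c. f c i) \<longlongrightarrow> l i) F)"
proof -
  have "(f \<longlongrightarrow> l) F \<longleftrightarrow> limitin (product_topology (\<lambda>i. euclidean) UNIV) f l F"
    by (simp add: euclidean_product_topology)
  also have "\<dots> \<longleftrightarrow> (\<forall>i. ((\<lambda>c. f c i) \<longlongrightarrow> l i) F)"
    by (simp add: limitin_componentwise)
  finally show ?thesis .
qed

lemma pairing_eq_sum:
  assumes "finite S" "supp phi \<subseteq> S"
  shows "pairing d phi f = (\<Sum>x\<in>S. \<Sum>i<d x. phi x i * f x i)"
  unfolding pairing_def
  apply (rule sum.mono_neutral_left)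
  using assms by (auto simp: supp_def)

lemma csd_supp: "phi \<in> csections_dual d \<Longrightarrow> finite (supp phi)"
  by (simp add: csections_dual_def supp_def)

lemma pairing_linear2: "Vector_Spaces.linear scl (*) (pairing d phi)"
  by unfold_locales (auto simp: pairing_def scl_def algebra_simps sum.distrib sum_distrib_left)

lemma pairing_cong2:
  assumes "\<And>x i. x \<in> supp phi \<Longrightarrow> i < d x \<Longrightarrow> f x i = g x i"
  shows "pairing d phi f = pairing d phi g"
  unfolding pairing_def using assms by (auto simp: supp_def intro!: sum.cong)

lemma pairing_add1:
  assumes "finite (supp phi)" "finite (supp psi)"
  shows "pairing d (phi + psi) f = pairing d phi f + pairing d psi f"
proof -
  let ?S = "supp phi \<union> supp psi"
  have "supp (phi + psi) \<subseteq> ?S" by (auto simp: supp_def)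
  then show ?thesis using assms
    by (simp add: pairing_eq_sum[of ?S] sum.distrib[symmetric] algebra_simps)
qed

lemma pairing_scl1:
  assumes "finite (supp phi)"
  shows "pairing d (scl c phi) f = c * pairing d phi f"
proof -
  have "supp (scl c phi) \<subseteq> supp phi" by (auto simp: supp_def scl_def)
  then show ?thesis using assms
    by (simp add: pairing_eq_sum[of "supp phi"] sum_distrib_left scl_def algebra_simps)
qed

lemma pairing_zero1[simp]: "pairing d 0 f = 0"
  by (simp add: pairing_def)

lemma dsum:
  fixes d :: "'a \<Rightarrow> nat"
  assumes "finite S"
  shows "(\<Sum>x\<in>S. \<Sum>i<d x. if y = x \<and> j = i then a x i else 0) = (if y \<in> S \<and> j < d y then a y j else 0)"
proof -
  have "\<And>x. (\<Sum>i<d x. if y = x \<and> j = i then a x i else 0) = (if y = x then (if j < d x then a x j else 0) else 0)"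
    by (auto simp: sum.delta')
  then have "(\<Sum>x\<in>S. \<Sum>i<d x. if y = x \<and> j = i then a x i else 0) = (\<Sum>x\<in>S. if y = x then (if j < d x then a x j else 0) else 0)"
    by simp
  also have "\<dots> = (if y \<in> S \<and> j < d y then a y j else 0)" using assms by (simp add: sum.delta')
  finally show ?thesis .
qed

lemma dsum':
  fixes d :: "'a \<Rightarrow> nat"
  assumes "finite S"
  shows "(\<Sum>y\<in>S. \<Sum>j<d y. if y = x \<and> j = i then a y j else 0) = (if x \<in> S \<and> i < d x then a x i else 0)"
proof -
  have "(\<Sum>y\<in>S. \<Sum>j<d y. if y = x \<and> j = i then a y j else 0) = (\<Sum>y\<in>S. \<Sum>j<d y. if x = y \<and> i = j then a y j else 0)"
    by (intro sum.cong refl) auto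
  then show ?thesis using dsum[OF assms, where y=x and j=i and a=a and d=d] by simp
qed

lemma pairing_dl1:
  assumes "i < d x"
  shows "pairing d (dl x i) f = f x i"
proof -
  have "supp (dl x i) \<subseteq> {x}" by (auto simp: supp_def dl_def fun_eq_iff)
  show ?thesis
  proof -
    have "(\<Sum>ia<d x. (if ia = i then 1 else 0) * f x ia) = (\<Sum>ia<d x. if i = ia then f x ia else 0)"
      by (intro sum.cong) auto
    then show ?thesis using assms \<open>supp (dl x i) \<subseteq> {x}\<close>
      by (simp add: pairing_eq_sum[of "{x}"] dl_def sum.delta')
  qed
qed

lemma pairing_dl2:
  assumes "i < d x" "finite (supp phi)"
  shows "pairing d phi (dl x i) = phi x i"
proof -
  have "supp phi \<subseteq> insert x (supp phi)" by auto
  then have "pairing d phi (dl x i) = (\<Sum>y\<in>insert x (supp phi). \<Sum>j<d y. phi y j * dl x i y j)"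
    using assms by (intro pairing_eq_sum) auto
  also have "\<dots> = (\<Sum>y\<in>insert x (supp phi). \<Sum>j<d y. if y = x \<and> j = i then phi y j else 0)"
    by (auto simp: dl_def intro!: sum.cong)
  also have "\<dots> = phi x i" using assms by (subst dsum') auto
  finally show ?thesis .
qed

lemma fibre_iff: "v \<in> fibre d x \<longleftrightarrow> (\<forall>i\<ge>d x. v i = 0)" by (simp add: fibre_def)

lemma dl_sections: "i < d x \<Longrightarrow> dl x i \<in> sections d"
  by (auto simp: dl_def sections_def fibre_def)

lemma dl_csd: "i < d x \<Longrightarrow> dl x i \<in> csections_dual d"
proof -
  assume "i < d x"
  moreover have "{y. dl x i y \<noteq> (\<lambda>_. 0)} \<subseteq> {x}" by (auto simp: dl_def fun_eq_iff)
  ultimately show ?thesis by (auto simp: dl_def csections_dual_def fibre_def intro: finite_subset)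
qed

lemma expansion:
  assumes "finite S" "\<And>x. psi x \<in> fibre d x"
  shows "(\<Sum>x\<in>S. \<Sum>i<d x. scl (psi x i) (dl x i)) = (\<lambda>x. if x \<in> S then psi x else (\<lambda>_. 0))"
proof (intro ext)
  fix y j
  have "(\<Sum>x\<in>S. \<Sum>i<d x. scl (psi x i) (dl x i)) y j = (\<Sum>x\<in>S. \<Sum>i<d x. psi x i * dl x i y j)"
    by (simp add: sum_sec_apply scl_def)
  also have "\<dots> = (\<Sum>x\<in>S. \<Sum>i<d x. if y = x \<and> j = i then psi x i else 0)"
    by (auto simp: dl_def intro!: sum.cong)
  also have "\<dots> = (if y \<in> S then psi y j else 0)"
    using assms by (subst dsum) (auto simp: fibre_def)
  finally show "(\<Sum>x\<in>S. \<Sum>i<d x. scl (psi x i) (dl x i)) y j = (if y \<in> S then psi y else (\<lambda>_. 0)) j"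
    by simp
qed

lemma csd_unique:
  assumes "psi1 \<in> csections_dual d" "psi2 \<in> csections_dual d"
    and "\<And>f. f \<in> sections d \<Longrightarrow> pairing d psi1 f = pairing d psi2 f"
  shows "psi1 = psi2"
proof (intro ext)
  fix x i
  show "psi1 x i = psi2 x i"
  proof (cases "i < d x")
    case True
    have "pairing d psi1 (dl x i) = pairing d psi2 (dl x i)" using assms(3) dl_sections[of i d x] True by blast
    then show ?thesis using pairing_dl2[of i d x] True csd_supp assms(1,2)
      by metis
  next
    case False
    then show ?thesis using assms(1,2) by (auto simp: csections_dual_def fibre_def)
  qed
qed

lemma sections_add: "f \<in> sections d \<Longrightarrow> g \<in> sections d \<Longrightarrow> f + g \<in> sections d"
  by (auto simp: sections_def fibre_def)
lemma sections_scl: "f \<in> sections d \<Longrightarrow> scl c f \<in> sections d"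
  by (auto simp: sections_def fibre_def scl_def)
lemma sections_zero: "0 \<in> sections d"
  by (auto simp: sections_def fibre_def)
lemma sections_diff: "f \<in> sections d \<Longrightarrow> g \<in> sections d \<Longrightarrow> f - g \<in> sections d"
  by (auto simp: sections_def fibre_def)
lemma sections_sum: "(\<And>k. k \<in> I \<Longrightarrow> F k \<in> sections d) \<Longrightarrow> sum F I \<in> sections d"
  by (induction I rule: infinite_finite_induct) (auto intro: sections_add sections_zero)

lemma csd_add: "f \<in> csections_dual d \<Longrightarrow> g \<in> csections_dual d \<Longrightarrow> f + g \<in> csections_dual d"
proof -
  assume a: "f \<in> csections_dual d" "g \<in> csections_dual d"
  have "{x. (f + g) x \<noteq> (\<lambda>_. 0)} \<subseteq> {x. f x \<noteq> (\<lambda>_. 0)} \<union> {x. g x \<noteq> (\<lambda>_. 0)}" by auto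
  with a show ?thesis by (auto simp: csections_dual_def fibre_def intro: finite_subset)
qed
lemma csd_scl: "f \<in> csections_dual d \<Longrightarrow> scl c f \<in> csections_dual d"
proof -
  assume a: "f \<in> csections_dual d"
  have "{x. scl c f x \<noteq> (\<lambda>_. 0)} \<subseteq> {x. f x \<noteq> (\<lambda>_. 0)}" by (auto simp: scl_def)
  with a show ?thesis by (auto simp: csections_dual_def fibre_def scl_def intro: finite_subset)
qed
lemma csd_zero: "0 \<in> csections_dual d"
  by (auto simp: csections_dual_def fibre_def)
lemma csd_diff: "f \<in> csections_dual d \<Longrightarrow> g \<in> csections_dual d \<Longrightarrow> f - g \<in> csections_dual d"
proof -
  assume a: "f \<in> csections_dual d" "g \<in> csections_dual d"
  have "f - g = f + scl (-1) g" by (auto simp: scl_def fun_eq_iff)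
  then show ?thesis using a csd_add csd_scl by metis
qed

definition projE :: "('x \<Rightarrow> nat) \<Rightarrow> 'x sec \<Rightarrow> 'x sec" where
  "projE d f = (\<lambda>x i. if i < d x then f x i else 0)"

lemma projE_sections: "projE d f \<in> sections d" by (auto simp: projE_def sections_def fibre_def)
lemma projE_id: "f \<in> sections d \<Longrightarrow> projE d f = f"
  by (auto simp: projE_def sections_def fibre_def fun_eq_iff)
lemma projE_add: "projE d (f + g) = projE d f + projE d g" by (auto simp: projE_def fun_eq_iff)
lemma projE_scl: "projE d (scl c f) = scl c (projE d f)" by (auto simp: projE_def scl_def fun_eq_iff)

locale opsetup =
  fixes d :: "'x::countable \<Rightarrow> nat" and A :: "'x sec \<Rightarrow> 'x sec"
  assumes maps: "A ` sections d \<subseteq> sections d"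
    and lin: "linear_on_sections d A"
    and cont: "continuous_on (sections d) A"
begin

lemma A_sec: "f \<in> sections d \<Longrightarrow> A f \<in> sections d" using maps by auto

lemma A_add: "f \<in> sections d \<Longrightarrow> g \<in> sections d \<Longrightarrow> A (f + g) = A f + A g"
  using lin unfolding linear_on_sections_def plus_fun_def by simp

lemma A_scl: "f \<in> sections d \<Longrightarrow> A (scl c f) = scl c (A f)"
  using lin unfolding linear_on_sections_def scl_def by simp

lemma A_zero: "A 0 = 0"
  using A_scl[OF sections_zero, of 0] by (simp add: scl_def fun_eq_iff zero_fun_def)

definition A0 where "A0 f = A (projE d f)"

lemma A0_linear: "Vector_Spaces.linear scl scl A0"
  by unfold_locales (simp_all add: A0_def projE_add projE_scl A_add A_scl projE_sections)

lemma A0_eq: "f \<in> sections d \<Longrightarrow> A0 f = A f" by (simp add: A0_def projE_id)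

lemma fin_dep: "\<exists>S. finite S \<and> (\<forall>f\<in>sections d. (\<forall>x\<in>S. f x = (\<lambda>_. 0)) \<longrightarrow> A f y j = 0)"
proof (rule ccontr)
  assume na: "\<not> ?thesis"
  have "\<forall>n. \<exists>f. f \<in> sections d \<and> (\<forall>x. to_nat x < n \<longrightarrow> f x = (\<lambda>_. 0)) \<and> A f y j \<noteq> 0"
  proof
    fix n
    have "finite {x::'x. to_nat x < n}"
      using finite_vimageI[of "{..<n}" "to_nat :: 'x \<Rightarrow> nat"] by (simp add: vimage_def)
    then show "\<exists>f. f \<in> sections d \<and> (\<forall>x. to_nat x < n \<longrightarrow> f x = (\<lambda>_. 0)) \<and> A f y j \<noteq> 0"
      using na by blast
  qed
  then obtain F where F: "\<And>n. F n \<in> sections d" "\<And>n x. to_nat x < n \<Longrightarrow> F n x = (\<lambda>_. 0)"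
      "\<And>n. A (F n) y j \<noteq> 0"
    by metis
  define h where "h n = scl (1 / A (F n) y j) (F n)" for n
  have hs: "h n \<in> sections d" for n using F by (simp add: h_def sections_scl)
  have h1: "A (h n) y j = 1" for n
  proof -
    have "A (h n) = scl (1 / A (F n) y j) (A (F n))"
      unfolding h_def by (rule A_scl[OF F(1)])
    then have "A (h n) y j = (1 / A (F n) y j) * A (F n) y j"
      by (simp add: scl_def)
    then show ?thesis using F(3)[of n] by simp
  qed
  have "h \<longlonglongrightarrow> 0"
  proof (subst tendsto_fun_iff, intro allI, subst tendsto_fun_iff, intro allI)
    fix x i
    have "eventually (\<lambda>n. h n x i = 0) sequentially"
      unfolding eventually_sequentially
      by (rule exI[of _ "Suc (to_nat x)"]) (auto simp: h_def scl_def F(2))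
    then show "(\<lambda>n. h n x i) \<longlonglongrightarrow> (0::'x sec) x i"
      by (simp add: tendsto_eventually)
  qed
  then have "(\<lambda>n. A (h n)) \<longlonglongrightarrow> A 0"
    using cont hs sections_zero unfolding continuous_on_sequentially comp_def by blast
  then have "(\<lambda>n. A (h n) y j) \<longlonglongrightarrow> 0"
    by (simp add: A_zero tendsto_fun_iff)
  then show False using h1 by (simp add: LIMSEQ_const_iff)
qed

lemma dual_exists:
  assumes phi: "phi \<in> csections_dual d"
  shows "\<exists>psi\<in>csections_dual d. \<forall>f\<in>sections d. pairing d psi f = pairing d phi (A f)"
proof -
  obtain SF where SF: "\<And>y j. finite (SF y j)"
    "\<And>y j f. f \<in> sections d \<Longrightarrow> (\<forall>x\<in>SF y j. f x = (\<lambda>_. 0)) \<Longrightarrow> A f y j = 0"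
    using fin_dep by metis
  define P where "P = supp phi"
  have Pf: "finite P" using phi csd_supp P_def by auto
  define S where "S = (\<Union>y\<in>P. \<Union>j<d y. SF y j)"
  have Sf: "finite S" unfolding S_def using Pf SF by auto
  define psi where "psi x i = (if x \<in> S \<and> i < d x then pairing d phi (A (dl x i)) else 0)" for x i
  have psi_c: "psi \<in> csections_dual d"
  proof -
    have "{x. psi x \<noteq> (\<lambda>_. 0)} \<subseteq> S" by (auto simp: psi_def fun_eq_iff)
    then show ?thesis using Sf by (auto simp: csections_dual_def fibre_def psi_def intro: finite_subset)
  qed
  have "pairing d psi f = pairing d phi (A f)" if f: "f \<in> sections d" for f
  proof -
    define fS where "fS = (\<lambda>x. if x \<in> S then f x else (\<lambda>_. 0))"
    define fR where "fR = (\<lambda>x. if x \<in> S then (\<lambda>_. 0) else f x)"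
    have fsplit: "f = fS + fR" by (auto simp: fS_def fR_def fun_eq_iff)
    have fSs: "fS \<in> sections d" "fR \<in> sections d" using f by (auto simp: fS_def fR_def sections_def fibre_def)
    have "A f = A fS + A fR" using fsplit fSs A_add by metis
    have R0: "A fR y j = 0" if "y \<in> P" "j < d y" for y j
    proof -
      have "\<forall>x\<in>SF y j. fR x = (\<lambda>_. 0)" using that by (auto simp: fR_def S_def)
      then show ?thesis using SF(2)[OF fSs(2)] by blast
    qed
    have "pairing d phi (A f) = pairing d phi (A fS)"
      using R0 \<open>A f = A fS + A fR\<close> by (intro pairing_cong2) (auto simp: P_def)
    also have "fS = (\<Sum>x\<in>S. \<Sum>i<d x. scl (f x i) (dl x i))"
      using expansion[OF Sf, of f d] f by (auto simp: fS_def sections_def)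
    also have "A (\<Sum>x\<in>S. \<Sum>i<d x. scl (f x i) (dl x i)) = (\<Sum>x\<in>S. \<Sum>i<d x. scl (f x i) (A0 (dl x i)))"
    proof -
      interpret l: Vector_Spaces.linear scl scl A0 by (rule A0_linear)
      have "A (\<Sum>x\<in>S. \<Sum>i<d x. scl (f x i) (dl x i)) = A0 (\<Sum>x\<in>S. \<Sum>i<d x. scl (f x i) (dl x i))"
        by (intro A0_eq[symmetric] sections_sum sections_scl dl_sections) auto
      then show ?thesis by (simp add: l.sum l.scale)
    qed
    also have "pairing d phi (\<Sum>x\<in>S. \<Sum>i<d x. scl (f x i) (A0 (dl x i))) = 
        (\<Sum>x\<in>S. \<Sum>i<d x. f x i * pairing d phi (A (dl x i)))"
    proof -
      interpret l: Vector_Spaces.linear scl "(*)" "pairing d phi" by (rule pairing_linear2)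
      show ?thesis by (simp add: l.sum l.scale A0_eq dl_sections)
    qed
    also have "\<dots> = (\<Sum>x\<in>S. \<Sum>i<d x. psi x i * f x i)"
      by (auto simp: psi_def intro!: sum.cong)
    also have "\<dots> = pairing d psi f"
      by (rule pairing_eq_sum[symmetric]) (use Sf in \<open>auto simp: supp_def psi_def fun_eq_iff\<close>)
    finally show ?thesis by simp
  qed
  then show ?thesis using psi_c by blast
qed

lemma dual_spec:
  assumes "phi \<in> csections_dual d"
  shows "dual_op d A phi \<in> csections_dual d \<and> (\<forall>f\<in>sections d. pairing d (dual_op d A phi) f = pairing d phi (A f))"
proof -
  obtain psi where psi: "psi \<in> csections_dual d" "\<forall>f\<in>sections d. pairing d psi f = pairing d phi (A f)"
    using dual_exists[OF assms] by blast
  show ?thesis unfolding dual_op_def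
    by (rule theI[of _ psi]) (use psi in \<open>auto intro: csd_unique\<close>)
qed

lemma D_csd: "phi \<in> csections_dual d \<Longrightarrow> dual_op d A phi \<in> csections_dual d"
  using dual_spec by blast
lemma D_pair: "phi \<in> csections_dual d \<Longrightarrow> f \<in> sections d \<Longrightarrow> pairing d (dual_op d A phi) f = pairing d phi (A f)"
  using dual_spec by blast

lemma D_add: "phi \<in> csections_dual d \<Longrightarrow> chi \<in> csections_dual d \<Longrightarrow>
   dual_op d A (phi + chi) = dual_op d A phi + dual_op d A chi"
proof (rule csd_unique)
  assume a: "phi \<in> csections_dual d" "chi \<in> csections_dual d"
  then show "dual_op d A (phi + chi) \<in> csections_dual d" "dual_op d A phi + dual_op d A chi \<in> csections_dual d"
    by (auto intro!: csd_add D_csd)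
  fix f assume f: "f \<in> sections d"
  have "pairing d (dual_op d A phi + dual_op d A chi) f = pairing d (dual_op d A phi) f + pairing d (dual_op d A chi) f"
    by (rule pairing_add1[OF csd_supp[OF D_csd[OF a(1)]] csd_supp[OF D_csd[OF a(2)]]])
  also have "\<dots> = pairing d phi (A f) + pairing d chi (A f)" using a f by (simp add: D_pair)
  also have "\<dots> = pairing d (phi + chi) (A f)" using a by (intro pairing_add1[symmetric] csd_supp)
  also have "\<dots> = pairing d (dual_op d A (phi + chi)) f" using a f by (simp add: D_pair csd_add)
  finally show "pairing d (dual_op d A (phi + chi)) f = pairing d (dual_op d A phi + dual_op d A chi) f" by simp
qed

lemma D_scl: "phi \<in> csections_dual d \<Longrightarrow> dual_op d A (scl c phi) = scl c (dual_op d A phi)"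
proof (rule csd_unique)
  assume a: "phi \<in> csections_dual d"
  then show "dual_op d A (scl c phi) \<in> csections_dual d" "scl c (dual_op d A phi) \<in> csections_dual d"
    by (auto intro!: csd_scl D_csd)
  fix f assume f: "f \<in> sections d"
  have "pairing d (scl c (dual_op d A phi)) f = c * pairing d (dual_op d A phi) f"
    by (rule pairing_scl1[OF csd_supp[OF D_csd[OF a(1)]]])
  also have "\<dots> = c * pairing d phi (A f)" using a f by (simp add: D_pair)
  also have "\<dots> = pairing d (scl c phi) (A f)" using a by (intro pairing_scl1[symmetric] csd_supp)
  also have "\<dots> = pairing d (dual_op d A (scl c phi)) f" using a f by (simp add: D_pair csd_scl)
  finally show "pairing d (dual_op d A (scl c phi)) f = pairing d (scl c (dual_op d A phi)) f" by simp
qed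

end

lemma norm_facts:
  assumes "is_norm_on V N"
  shows "\<And>v. v \<in> V \<Longrightarrow> 0 \<le> N v" "\<And>v. v \<in> V \<Longrightarrow> N v = 0 \<longleftrightarrow> v = (\<lambda>_. 0)"
    "\<And>c v. v \<in> V \<Longrightarrow> N (\<lambda>i. c * v i) = cmod c * N v"
    "\<And>v w. v \<in> V \<Longrightarrow> w \<in> V \<Longrightarrow> N (\<lambda>i. v i + w i) \<le> N v + N w"
  using assms unfolding is_norm_on_def by blast+

lemma fibre_add: "v \<in> fibre d x \<Longrightarrow> w \<in> fibre d x \<Longrightarrow> (\<lambda>i. v i + w i) \<in> fibre d x"
  by (simp add: fibre_def)
lemma fibre_scale: "v \<in> fibre d x \<Longrightarrow> (\<lambda>i. c * v i) \<in> fibre d x"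
  by (simp add: fibre_def)
lemma fibre_zero: "(\<lambda>_. 0) \<in> fibre d x"
  by (simp add: fibre_def)

lemma norm_sum_le:
  assumes N: "is_norm_on (fibre d x) Nx" and T: "finite T" and w: "\<forall>t\<in>T. w t \<in> fibre d x"
  shows "(\<Sum>t\<in>T. (\<lambda>i. c t * w t i)) \<in> fibre d x \<and>
         Nx (\<Sum>t\<in>T. (\<lambda>i. c t * w t i)) \<le> (\<Sum>t\<in>T. cmod (c t) * Nx (w t))"
  using T w
proof (induction T rule: finite_induct)
  case empty
  have "Nx (\<lambda>_. 0) = 0" using norm_facts(2)[OF N fibre_zero] by simp
  then show ?case by (simp add: fibre_zero zero_fun_def)
next
  case (insert t T)
  let ?r = "(\<Sum>t\<in>T. (\<lambda>i. c t * w t i))"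
  have r: "?r \<in> fibre d x" "Nx ?r \<le> (\<Sum>t\<in>T. cmod (c t) * Nx (w t))" using insert by auto
  have wt: "w t \<in> fibre d x" using insert by auto
  have eq: "(\<Sum>t\<in>insert t T. (\<lambda>i. c t * w t i)) = (\<lambda>i. (\<lambda>i. c t * w t i) i + ?r i)"
    using insert by (simp add: plus_fun_def)
  have "Nx (\<lambda>i. (\<lambda>i. c t * w t i) i + ?r i) \<le> Nx (\<lambda>i. c t * w t i) + Nx ?r"
    by (rule norm_facts(4)[OF N fibre_scale[OF wt] r(1)])
  also have "\<dots> \<le> cmod (c t) * Nx (w t) + (\<Sum>t\<in>T. cmod (c t) * Nx (w t))"
    using r(2) norm_facts(3)[OF N wt] by simp
  finally show ?case using eq insert fibre_add[OF fibre_scale[OF wt] r(1)] by simp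
qed

lemma norm_lower:
  assumes N: "is_norm_on (fibre d x) Nx"
  shows "\<exists>c>0. \<forall>v\<in>fibre d x. \<forall>i. cmod (v i) \<le> c * Nx v"
proof (cases "d x = 0")
  case True
  then show ?thesis using norm_facts(1)[OF N]
    by (intro exI[of _ 1]) (auto simp: fibre_def)
next
  case False
  define n where "n = d x"
  have n: "n > 0" using False n_def by simp
  define e where "e i = (\<lambda>j. if j = i then (1::complex) else 0)" for i :: nat
  have e_f: "i < n \<Longrightarrow> e i \<in> fibre d x" for i by (auto simp: e_def fibre_def n_def)
  have decomp: "v = (\<Sum>i<n. (\<lambda>j. v i * e i j))" if "v \<in> fibre d x" for v
  proof
    fix j
    have "(\<Sum>i<n. (\<lambda>j. v i * e i j)) j = (\<Sum>i<n. v i * (if j = i then 1 else 0))"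
      by (simp add: sum_fn_apply e_def)
    also have "\<dots> = (\<Sum>i<n. if j = i then v i else 0)"
      by (rule sum.cong) auto
    also have "\<dots> = v j" using that by (simp add: sum.delta' fibre_def n_def)
    finally show "v j = (\<Sum>i<n. (\<lambda>j. v i * e i j)) j" by simp
  qed
  have upper: "Nx v \<le> (\<Sum>i<n. cmod (v i) * Nx (e i))" if "v \<in> fibre d x" for v
    using norm_sum_le[OF N, of "{..<n}" e v] e_f decomp[OF that] by simp
  define Box where "Box = PiE UNIV (\<lambda>i::nat. if i < n then cball (0::complex) 1 else {0})"
  have "compactin (product_topology (\<lambda>i. euclidean) UNIV) Box"
    unfolding Box_def by (subst compactin_PiE) auto
  then have cBox: "compact Box"
    by (simp add: euclidean_product_topology)
  define Sph where "Sph = Box \<inter> {v. (\<Sum>i<n. cmod (v i)) = 1}"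
  have "closed {v::nat \<Rightarrow> complex. (\<Sum>i<n. cmod (v i)) = 1}"
    by (intro closed_Collect_eq continuous_intros continuous_on_product_coordinates)
  then have cSph: "compact Sph" unfolding Sph_def using cBox by (rule compact_Int_closed[rotated])
  have Sph_f: "v \<in> fibre d x" if "v \<in> Sph" for v
    using that unfolding Sph_def Box_def fibre_def n_def PiE_iff by (auto split: if_splits)
  have e0: "e 0 \<in> Sph"
  proof -
    have "(\<Sum>i<n. cmod (e 0 i)) = (\<Sum>i<n. if i = 0 then 1 else 0)"
      by (rule sum.cong) (auto simp: e_def)
    also have "\<dots> = 1" using n by (simp only: sum.delta finite_lessThan) (simp add: n)
    finally have 1: "(\<Sum>i<n. cmod (e 0 i)) = 1" .
    have "e 0 \<in> Box" unfolding Box_def PiE_iff using n by (auto simp: e_def)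
    then show ?thesis using 1 by (simp add: Sph_def)
  qed
  have contN: "continuous_on Sph Nx"
  proof (rule continuous_on_sequentiallyI)
    fix u a assume u: "\<forall>k. u k \<in> Sph" and a: "a \<in> Sph" and lim: "u \<longlonglongrightarrow> a"
    have uf: "u k \<in> fibre d x" for k using u Sph_f by auto
    have af: "a \<in> fibre d x" using a Sph_f by auto
    have bnd: "norm (Nx (u k) - Nx a) \<le> (\<Sum>i<n. cmod (u k i - a i) * Nx (e i))" for k
    proof -
      define w where "w = (\<lambda>i. u k i - a i)"
      have wf: "w \<in> fibre d x" using uf af by (simp add: w_def fibre_def)
      have "Nx (u k) = Nx (\<lambda>i. w i + a i)" by (simp add: w_def)
      also have "\<dots> \<le> Nx w + Nx a" by (rule norm_facts(4)[OF N wf af])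
      finally have 1: "Nx (u k) \<le> Nx w + Nx a" .
      have "Nx a = Nx (\<lambda>i. (-1) * w i + u k i)" by (simp add: w_def)
      also have "\<dots> \<le> Nx (\<lambda>i. (-1) * w i) + Nx (u k)" by (rule norm_facts(4)[OF N fibre_scale[OF wf] uf])
      also have "Nx (\<lambda>i. (-1) * w i) = Nx w" using norm_facts(3)[OF N wf, of "-1"] by simp
      finally have 2: "Nx a \<le> Nx w + Nx (u k)" .
      have "norm (Nx (u k) - Nx a) \<le> Nx w" using 1 2 by simp
      also have "\<dots> \<le> (\<Sum>i<n. cmod (w i) * Nx (e i))" by (rule upper[OF wf])
      finally show ?thesis by (simp add: w_def)
    qed
    have "(\<lambda>k. \<Sum>i<n. cmod (u k i - a i) * Nx (e i)) \<longlonglongrightarrow> 0"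
    proof (rule tendsto_null_sum)
      fix i
      have "(\<lambda>k. u k i) \<longlonglongrightarrow> a i" using lim unfolding tendsto_fun_iff[of u] by blast
      then have "(\<lambda>k. u k i - a i) \<longlonglongrightarrow> 0" by (rule LIM_zero)
      then have "(\<lambda>k. cmod (u k i - a i)) \<longlonglongrightarrow> 0" by (rule tendsto_norm_zero)
      then show "(\<lambda>k. cmod (u k i - a i) * Nx (e i)) \<longlonglongrightarrow> 0" by (rule tendsto_mult_left_zero)
    qed
    then have "(\<lambda>k. Nx (u k) - Nx a) \<longlonglongrightarrow> 0"
      using Lim_null_comparison[OF always_eventually[of "\<lambda>k. norm (Nx (u k) - Nx a) \<le> (\<Sum>i<n. cmod (u k i - a i) * Nx (e i))"]] bnd
      by blast
    then show "(\<lambda>k. Nx (u k)) \<longlonglongrightarrow> Nx a" by (rule LIM_zero_cancel)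
  qed
  obtain v0 where v0: "v0 \<in> Sph" "\<And>v. v \<in> Sph \<Longrightarrow> Nx v0 \<le> Nx v"
    using continuous_attains_inf[OF cSph _ contN] e0 by blast
  have v0nz: "v0 \<noteq> (\<lambda>_. 0)" using v0(1) n by (auto simp: Sph_def)
  define m where "m = Nx v0"
  have m: "m > 0" proof -
    have "Nx v0 \<ge> 0" "Nx v0 \<noteq> 0" using norm_facts(1,2)[OF N Sph_f[OF v0(1)]] v0nz by auto
    then show ?thesis unfolding m_def by linarith
  qed
  show ?thesis
  proof (intro exI[of _ "1/m"] conjI ballI allI)
    show "1/m > 0" using m by simp
    fix v i assume vf: "v \<in> fibre d x"
    define s where "s = (\<Sum>k<n. cmod (v k))"
    show "cmod (v i) \<le> 1 / m * Nx v"
    proof (cases "i < n \<and> s \<noteq> 0")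
      case False
      have "v i = 0"
      proof (cases "i < n")
        case False then show ?thesis using vf by (simp add: fibre_def n_def)
      next
        case True
        then have "s = 0" using \<open>\<not> (i < n \<and> s \<noteq> 0)\<close> by simp
        then have "\<forall>k\<in>{..<n}. cmod (v k) = 0" unfolding s_def by (subst sum_nonneg_eq_0_iff[symmetric]) auto
        then show ?thesis using True by auto
      qed
      then show ?thesis using norm_facts(1)[OF N vf] m by simp
    next
      case True
      have s: "s > 0" using True by (simp add: s_def sum_nonneg order_le_neq_trans)
      define w where "w = (\<lambda>k. complex_of_real (1/s) * v k)"
      have "w \<in> Sph"
      proof -
        have "(\<Sum>k<n. cmod (w k)) = (\<Sum>k<n. (1/s) * cmod (v k))"
          using s by (intro sum.cong refl) (simp add: w_def norm_mult norm_divide)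
        also have "\<dots> = (1/s) * s" unfolding s_def by (rule sum_distrib_left[symmetric])
        also have "\<dots> = 1" using s by simp
        finally have 1: "(\<Sum>k<n. cmod (w k)) = 1" .
        have "cmod (w k) \<le> 1" for k
        proof (cases "k < n")
          case True
          then show ?thesis using 1 member_le_sum[of k "{..<n}" "\<lambda>k. cmod (w k)"] by simp
        qed (use vf in \<open>simp add: w_def fibre_def n_def\<close>)
        moreover have "k \<ge> n \<Longrightarrow> w k = 0" for k using vf by (simp add: w_def fibre_def n_def)
        ultimately have "w \<in> Box" unfolding Box_def by (auto simp: PiE_iff dist_norm)
        then show ?thesis using 1 unfolding Sph_def by simp
      qed
      then have "m \<le> Nx w" using v0(2) m_def by auto
      also have "Nx w = cmod (complex_of_real (1/s)) * Nx v" unfolding w_def by (rule norm_facts(3)[OF N vf])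
      also have "\<dots> = (1/s) * Nx v" using s by (simp only: norm_of_real) simp
      finally have "m * s \<le> Nx v" using s by (simp add: field_simps)
      moreover have "cmod (v i) \<le> s" unfolding s_def using True by (intro member_le_sum) auto
      ultimately have "m * cmod (v i) \<le> Nx v" using m
        by (meson less_eq_real_def mult_left_mono order_trans)
      then show ?thesis using m by (simp add: field_simps)
    qed
  qed
qed

interpretation vsp: vector_space_pair "scl :: complex \<Rightarrow> 'x sec \<Rightarrow> 'x sec" "(*) :: complex \<Rightarrow> complex \<Rightarrow> complex"
  by unfold_locales (auto simp: scl_def fun_eq_iff algebra_simps)

lemma sum_apply1: "(\<Sum>k\<in>I. (F k :: 'a \<Rightarrow> 'b::comm_monoid_add)) x = (\<Sum>k\<in>I. F k x)"
  by (induction I rule: infinite_finite_induct) auto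

definition uL :: "('x \<Rightarrow> nat) \<Rightarrow> ('x sec \<Rightarrow> complex) \<Rightarrow> 'x sec" where
  "uL d L = (\<lambda>x i. if i < d x then L (dl x i) else 0)"

lemma uL_sections: "uL d L \<in> sections d" by (auto simp: uL_def sections_def fibre_def)

lemma rep:
  assumes L: "Vector_Spaces.linear scl (*) L" and psi: "psi \<in> csections_dual d"
  shows "pairing d psi (uL d L) = L psi"
proof -
  interpret l: Vector_Spaces.linear scl "(*)" L by fact
  define P where "P = supp psi"
  have Pf: "finite P" using csd_supp[OF psi] P_def by simp
  have fib: "\<And>x. psi x \<in> fibre d x" using psi by (simp add: csections_dual_def)
  have "pairing d psi (uL d L) = (\<Sum>x\<in>P. \<Sum>i<d x. psi x i * L (dl x i))"
    using Pf by (simp add: pairing_eq_sum[of P] P_def uL_def)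
  also have "\<dots> = L (\<Sum>x\<in>P. \<Sum>i<d x. scl (psi x i) (dl x i))"
    by (simp add: l.sum l.scale)
  also have "(\<Sum>x\<in>P. \<Sum>i<d x. scl (psi x i) (dl x i)) = psi"
    using expansion[OF Pf fib] by (auto simp: P_def supp_def fun_eq_iff)
  finally show ?thesis .
qed

lemma solve:
  fixes B Bt :: "'x sec \<Rightarrow> 'x sec"
  assumes Bs: "\<And>f. f \<in> sections d \<Longrightarrow> B f \<in> sections d"
    and Btc: "\<And>phi. phi \<in> csections_dual d \<Longrightarrow> Bt phi \<in> csections_dual d"
    and adj: "\<And>phi f. phi \<in> csections_dual d \<Longrightarrow> f \<in> sections d \<Longrightarrow> pairing d (Bt phi) f = pairing d phi (B f)"
    and Badd: "\<And>phi chi. phi \<in> csections_dual d \<Longrightarrow> chi \<in> csections_dual d \<Longrightarrow> Bt (phi + chi) = Bt phi + Bt chi"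
    and Bscl: "\<And>phi c. phi \<in> csections_dual d \<Longrightarrow> Bt (scl c phi) = scl c (Bt phi)"
    and g: "g \<in> sections d"
    and orth: "\<And>phi. phi \<in> csections_dual d \<Longrightarrow> Bt phi = 0 \<Longrightarrow> pairing d phi g = 0"
  shows "\<exists>f\<in>sections d. B f = g"
proof -
  define W where "W = Bt ` csections_dual d"
  obtain \<beta> where beta: "\<beta> \<subseteq> W" "vs.independent \<beta>" "W \<subseteq> vs.span \<beta>"
    by (rule vs.basis_exists)
  define pre where "pre b = (SOME phi. phi \<in> csections_dual d \<and> Bt phi = b)" for b
  have pre: "pre b \<in> csections_dual d \<and> Bt (pre b) = b" if "b \<in> \<beta>" for b
  proof -
    have "\<exists>phi. phi \<in> csections_dual d \<and> Bt phi = b" using that beta(1) W_def by auto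
    then show ?thesis unfolding pre_def by (rule someI_ex)
  qed
  obtain L where L: "Vector_Spaces.linear scl (*) L" "\<And>b. b \<in> \<beta> \<Longrightarrow> L b = pairing d (pre b) g"
    using vsp.linear_independent_extend[OF beta(2), of "\<lambda>b. pairing d (pre b) g"] by blast
  interpret l: Vector_Spaces.linear scl "(*)" L by fact
  have Bt0: "Bt 0 = 0"
    using Bscl[OF csd_zero, of 0] by (simp add: scl_def zero_fun_def)
  have Q: "\<exists>phi\<in>csections_dual d. Bt phi = w \<and> L w = pairing d phi g" if "w \<in> vs.span \<beta>" for w
    using that
  proof (induction rule: vs.span_induct)
    case base
    show ?case
    proof (rule vs.subspaceI, unfold mem_Collect_eq)
      show "\<exists>phi\<in>csections_dual d. Bt phi = 0 \<and> L 0 = pairing d phi g"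
        using csd_zero Bt0 by (intro bexI[of _ 0]) auto
    next
      fix w1 w2
      assume "\<exists>phi\<in>csections_dual d. Bt phi = w1 \<and> L w1 = pairing d phi g"
        "\<exists>phi\<in>csections_dual d. Bt phi = w2 \<and> L w2 = pairing d phi g"
      then obtain p1 p2 where p: "p1 \<in> csections_dual d" "Bt p1 = w1" "L w1 = pairing d p1 g"
        "p2 \<in> csections_dual d" "Bt p2 = w2" "L w2 = pairing d p2 g" by blast
      show "\<exists>phi\<in>csections_dual d. Bt phi = w1 + w2 \<and> L (w1 + w2) = pairing d phi g"
        using p by (intro bexI[of _ "p1 + p2"]) (auto simp: Badd l.add pairing_add1 csd_supp csd_add)
    next
      fix c w
      assume "\<exists>phi\<in>csections_dual d. Bt phi = w \<and> L w = pairing d phi g"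
      then obtain p where p: "p \<in> csections_dual d" "Bt p = w" "L w = pairing d p g" by blast
      show "\<exists>phi\<in>csections_dual d. Bt phi = scl c w \<and> L (scl c w) = pairing d phi g"
        using p by (intro bexI[of _ "scl c p"]) (auto simp: Bscl l.scale pairing_scl1 csd_supp csd_scl)
    qed
  next
    case (step b)
    then show ?case using pre[OF step] L(2)[OF step] by blast
  qed
  have key: "L (Bt phi) = pairing d phi g" if phi: "phi \<in> csections_dual d" for phi
  proof -
    have "Bt phi \<in> vs.span \<beta>" using beta(3) phi W_def by auto
    then obtain p where p: "p \<in> csections_dual d" "Bt p = Bt phi" "L (Bt phi) = pairing d p g"
      using Q by blast
    have dm: "phi - p \<in> csections_dual d" using phi p by (simp add: csd_diff)
    have "Bt phi = Bt (phi - p) + Bt p" using Badd[OF dm p(1)] by simp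
    then have "Bt (phi - p) = 0" using p(2) by simp
    then have "pairing d (phi - p) g = 0" using orth dm by blast
    moreover have "pairing d phi g = pairing d (phi - p) g + pairing d p g"
      using pairing_add1[OF csd_supp[OF dm] csd_supp[OF p(1)]] by simp
    ultimately show ?thesis using p(3) by simp
  qed
  have "B (uL d L) = g"
  proof (intro ext)
    fix y j
    show "B (uL d L) y j = g y j"
    proof (cases "j < d y")
      case True
      have dc: "dl y j \<in> csections_dual d" using dl_csd[of j d y] True by simp
      have "B (uL d L) y j = pairing d (dl y j) (B (uL d L))" by (simp add: pairing_dl1 True)
      also have "\<dots> = pairing d (Bt (dl y j)) (uL d L)" using adj[OF dc uL_sections] by simp
      also have "\<dots> = L (Bt (dl y j))" by (rule rep[OF L(1) Btc[OF dc]])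
      also have "\<dots> = pairing d (dl y j) g" by (rule key[OF dc])
      also have "\<dots> = g y j" by (simp add: pairing_dl1 True)
      finally show ?thesis .
    next
      case False
      then show ?thesis using Bs[OF uL_sections] g by (auto simp: sections_def fibre_def)
    qed
  qed
  then show ?thesis using uL_sections by blast
qed

lemma bnd:
  assumes norms: "\<And>x. is_norm_on (fibre d x) (N x)"
    and phi: "phi \<in> csections_dual d" and K': "finite K'" "supp phi \<subseteq> K'"
  shows "\<exists>C\<ge>0. \<forall>g\<in>sections d. cmod (pairing d phi g) \<le> C * seminorm_K N K' g"
proof -
  have "\<forall>x. \<exists>c>0. \<forall>v\<in>fibre d x. \<forall>i. cmod (v i) \<le> c * N x v"
    using norm_lower[OF norms] by blast
  then obtain cc where cc: "\<And>x. cc x > 0" "\<And>x v i. v \<in> fibre d x \<Longrightarrow> cmod (v i) \<le> cc x * N x v"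
    by metis
  define P where "P = supp phi"
  have Pf: "finite P" using csd_supp[OF phi] P_def by simp
  define C where "C = (\<Sum>x\<in>P. \<Sum>i<d x. cmod (phi x i) * cc x)"
  have C0: "C \<ge> 0" unfolding C_def using cc(1) by (intro sum_nonneg mult_nonneg_nonneg) (auto simp: less_imp_le)
  have "cmod (pairing d phi g) \<le> C * seminorm_K N K' g" if g: "g \<in> sections d" for g
  proof -
    have gf: "g x \<in> fibre d x" for x using g by (simp add: sections_def)
    have Ng: "N x (g x) \<le> seminorm_K N K' g" if "x \<in> K'" for x
      unfolding seminorm_K_def using K'(1) that norm_facts(1)[OF norms gf]
      by (intro member_le_sum) auto
    have "cmod (pairing d phi g) = cmod (\<Sum>x\<in>P. \<Sum>i<d x. phi x i * g x i)"
      using Pf by (simp add: pairing_eq_sum[of P] P_def)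
    also have "\<dots> \<le> (\<Sum>x\<in>P. cmod (\<Sum>i<d x. phi x i * g x i))" by (rule norm_sum)
    also have "\<dots> \<le> (\<Sum>x\<in>P. \<Sum>i<d x. cmod (phi x i) * cmod (g x i))"
      by (intro sum_mono order_trans[OF norm_sum]) (simp add: norm_mult)
    also have "\<dots> \<le> (\<Sum>x\<in>P. \<Sum>i<d x. cmod (phi x i) * (cc x * seminorm_K N K' g))"
    proof (intro sum_mono mult_left_mono)
      fix x i assume x: "x \<in> P"
      have "cmod (g x i) \<le> cc x * N x (g x)" by (rule cc(2)[OF gf])
      also have "\<dots> \<le> cc x * seminorm_K N K' g"
        using Ng[of x] x K'(2) P_def cc(1)[of x] by (intro mult_left_mono) auto
      finally show "cmod (g x i) \<le> cc x * seminorm_K N K' g" .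
    qed auto
    also have "\<dots> = C * seminorm_K N K' g"
      by (simp add: C_def sum_distrib_right mult.assoc)
    finally show ?thesis .
  qed
  then show ?thesis using C0 by blast
qed

lemma seminorm_nonneg:
  assumes norms: "\<And>x. is_norm_on (fibre d x) (N x)" and f: "f \<in> sections d"
  shows "seminorm_K N K f \<ge> 0"
  unfolding seminorm_K_def using f norm_facts(1)[OF norms] by (intro sum_nonneg) (auto simp: sections_def)

theorem lemma3p3:
  fixes d :: "'x::countable \<Rightarrow> nat"
    and N :: "'x \<Rightarrow> (nat \<Rightarrow> complex) \<Rightarrow> real"
    and A :: "('x \<Rightarrow> nat \<Rightarrow> complex) \<Rightarrow> ('x \<Rightarrow> nat \<Rightarrow> complex)"
    and K :: "'x set"
  assumes norms: "\<And>x. is_norm_on (fibre d x) (N x)"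
    and maps: "A ` sections d \<subseteq> sections d"
    and lin: "linear_on_sections d A"
    and cont: "continuous_on (sections d) A"
    and inj: "inj_on (dual_op d A) (csections_dual d)"
    and K: "finite K" "K \<noteq> {}"
  shows "\<exists>e>0. \<exists>K'. finite K' \<and> K' \<noteq> {} \<and>
           scale_sec e ` U_ball d N K' \<subseteq> A ` U_ball d N K"
proof -
  interpret opsetup d A using maps lin cont by unfold_locales
  define D where "D = dual_op d A"
  define zK where "zK f = (\<lambda>x. if x \<in> K then (\<lambda>_. 0) else f x)" for f :: "'x sec"
  have zK_sec: "zK f \<in> sections d" if "f \<in> sections d" for f
    using that by (auto simp: zK_def sections_def fibre_def)
  have zK_csd: "zK f \<in> csections_dual d" if f: "f \<in> csections_dual d" for f
  proof -
    have "{x. zK f x \<noteq> (\<lambda>_. 0)} \<subseteq> {x. f x \<noteq> (\<lambda>_. 0)}" by (auto simp: zK_def)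
    then show ?thesis using f by (auto simp: csections_dual_def zK_def fibre_def intro: finite_subset)
  qed
  have zK_add: "zK (f + g) = zK f + zK g" for f g by (auto simp: zK_def fun_eq_iff)
  have zK_scl: "zK (scl c f) = scl c (zK f)" for c f by (auto simp: zK_def scl_def fun_eq_iff)
  have zK_0: "zK 0 = 0" by (auto simp: zK_def fun_eq_iff)
  have zK_pair: "pairing d (zK psi) f = pairing d psi (zK f)" if fs: "finite (supp psi)" for psi f
  proof -
    have "supp (zK psi) \<subseteq> supp psi" by (auto simp: supp_def zK_def)
    then have "pairing d (zK psi) f = (\<Sum>x\<in>supp psi. \<Sum>i<d x. zK psi x i * f x i)"
      using fs by (intro pairing_eq_sum) auto
    also have "\<dots> = (\<Sum>x\<in>supp psi. \<Sum>i<d x. psi x i * zK f x i)"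
      by (intro sum.cong refl) (auto simp: zK_def)
    also have "\<dots> = pairing d psi (zK f)" using fs by (intro pairing_eq_sum[symmetric]) auto
    finally show ?thesis .
  qed
  have solveK: "\<exists>z\<in>sections d. A (zK z) = g"
    if g: "g \<in> sections d" and o: "\<And>phi. phi \<in> csections_dual d \<Longrightarrow> zK (D phi) = 0 \<Longrightarrow> pairing d phi g = 0" for g
  proof (rule solve[of d "\<lambda>f. A (zK f)" "\<lambda>phi. zK (D phi)"])
    show "\<And>f. f \<in> sections d \<Longrightarrow> A (zK f) \<in> sections d" using zK_sec A_sec by blast
    show "\<And>phi. phi \<in> csections_dual d \<Longrightarrow> zK (D phi) \<in> csections_dual d"
      using zK_csd D_csd D_def by blast
    show "\<And>phi f. phi \<in> csections_dual d \<Longrightarrow> f \<in> sections d \<Longrightarrow>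
        pairing d (zK (D phi)) f = pairing d phi (A (zK f))"
    proof -
      fix phi f assume phi: "phi \<in> csections_dual d" and f: "f \<in> sections d"
      have "pairing d (zK (D phi)) f = pairing d (D phi) (zK f)"
        by (rule zK_pair[OF csd_supp[OF D_csd[OF phi, folded D_def]]])
      also have "\<dots> = pairing d phi (A (zK f))" using D_pair[OF phi zK_sec[OF f]] D_def by simp
      finally show "pairing d (zK (D phi)) f = pairing d phi (A (zK f))" .
    qed
    show "\<And>phi chi. phi \<in> csections_dual d \<Longrightarrow> chi \<in> csections_dual d \<Longrightarrow>
        zK (D (phi + chi)) = zK (D phi) + zK (D chi)"
      using D_add zK_add D_def by simp
    show "\<And>phi c. phi \<in> csections_dual d \<Longrightarrow> zK (D (scl c phi)) = scl c (zK (D phi))"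
      using D_scl zK_scl D_def by simp
  qed (use g o in auto)
  define Phi where "Phi = {phi \<in> csections_dual d. zK (D phi) = 0}"
  define W where "W = D ` Phi"
  obtain T where T: "T \<subseteq> W" "vs.independent T" "W \<subseteq> vs.span T" by (rule vs.basis_exists)
  have W_props: "t \<in> csections_dual d \<and> (\<forall>x. x \<notin> K \<longrightarrow> t x = (\<lambda>_. 0))" if tW: "t \<in> W" for t
  proof -
    obtain phi where ph: "phi \<in> Phi" "t = D phi" using tW W_def by auto
    have pc: "phi \<in> csections_dual d" "zK (D phi) = 0" using ph(1) Phi_def by auto
    have tc: "t \<in> csections_dual d" using D_csd[OF pc(1)] ph(2) D_def by simp
    have "t x = (\<lambda>_. 0)" if x: "x \<notin> K" for x
    proof -
      have "zK t x = (0::'x sec) x" using pc(2) ph(2) by simp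
      then show ?thesis using x by (simp add: zK_def zero_fun_def)
    qed
    then show ?thesis using tc by blast
  qed
  define Del where "Del = (\<lambda>(x, i). dl x i) ` (SIGMA x:K. {..<d x})"
  have Del_f: "finite Del" unfolding Del_def using K(1) by auto
  have W_span: "W \<subseteq> vs.span Del"
  proof
    fix t assume t: "t \<in> W"
    have fib: "\<And>x. t x \<in> fibre d x" using W_props[OF t] by (simp add: csections_dual_def)
    have "t = (\<Sum>x\<in>K. \<Sum>i<d x. scl (t x i) (dl x i))"
      using expansion[OF K(1) fib] W_props[OF t] by (auto simp: fun_eq_iff)
    also have "\<dots> \<in> vs.span Del"
      by (intro vs.span_sum vs.span_scale vs.span_base) (auto simp: Del_def)
    finally show "t \<in> vs.span Del" .
  qed
  have Tf: "finite T"
    using vs.independent_span_bound[OF Del_f T(2)] T(1) W_span by auto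
  define pre where "pre t = (SOME phi. phi \<in> Phi \<and> D phi = t)" for t
  have pre: "pre t \<in> Phi \<and> D (pre t) = t" if "t \<in> T" for t
  proof -
    have "\<exists>phi. phi \<in> Phi \<and> D phi = t" using that T(1) W_def by auto
    then show ?thesis unfolding pre_def by (rule someI_ex)
  qed
  have "\<forall>t. \<exists>L. Vector_Spaces.linear scl (*) L \<and> (\<forall>t'\<in>T. L t' = (if t' = t then 1 else 0))"
  proof
    fix t
    show "\<exists>L. Vector_Spaces.linear scl (*) L \<and> (\<forall>t'\<in>T. L t' = (if t' = t then 1 else 0))"
      using vsp.linear_independent_extend[OF T(2), of "\<lambda>t'. if t' = t then 1 else 0"] by simp
  qed
  from choice[OF this] obtain LL where LL0:
    "\<forall>t. Vector_Spaces.linear scl (*) (LL t) \<and> (\<forall>t'\<in>T. LL t t' = (if t' = t then 1 else 0))"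
    by blast
  have LL: "\<And>t. Vector_Spaces.linear scl (*) (LL t)"
    "\<And>t t'. t' \<in> T \<Longrightarrow> LL t t' = (if t' = t then 1 else 0)"
    using LL0 by blast+
  define uK where "uK t = (\<lambda>x i. if x \<in> K \<and> i < d x then LL t (dl x i) else 0)" for t
  have uK_sec: "uK t \<in> sections d" for t by (auto simp: uK_def sections_def fibre_def)
  have biorth: "pairing d t' (uK t) = (if t' = t then 1 else 0)" if t': "t' \<in> T" for t t'
  proof -
    have t'W: "t' \<in> W" using t' T(1) by auto
    have "pairing d t' (uK t) = pairing d t' (uL d (LL t))"
    proof (rule pairing_cong2)
      fix x i assume "x \<in> supp t'" "i < d x"
      then show "uK t x i = uL d (LL t) x i"
        using W_props[OF t'W] by (auto simp: uK_def uL_def supp_def)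
    qed
    also have "\<dots> = LL t t'" using rep[OF LL(1)] W_props[OF t'W] by blast
    finally show ?thesis using LL(2)[OF t'] by simp
  qed
  define R where "R g = (\<Sum>t\<in>T. scl (pairing d (pre t) g) (uK t))" for g
  have R_sec: "R g \<in> sections d" for g
    unfolding R_def by (intro sections_sum sections_scl uK_sec)
  have C1: "pairing d t' (R g) = pairing d (pre t') g" if t': "t' \<in> T" for t' g
  proof -
    interpret l: Vector_Spaces.linear scl "(*)" "pairing d t'" by (rule pairing_linear2)
    have "pairing d t' (R g) = (\<Sum>t\<in>T. pairing d (pre t) g * pairing d t' (uK t))"
      by (simp add: R_def l.sum l.scale)
    also have "\<dots> = (\<Sum>t\<in>T. if t' = t then pairing d (pre t) g else 0)"
      by (intro sum.cong refl) (simp add: biorth[OF t'])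
    also have "\<dots> = pairing d (pre t') g" using Tf t' by (simp add: sum.delta)
    finally show ?thesis .
  qed
  have Dadd: "D (p + q) = D p + D q" if "p \<in> csections_dual d" "q \<in> csections_dual d" for p q
    using D_add[OF that] D_def by simp
  have Dscl: "D (scl c p) = scl c (D p)" if "p \<in> csections_dual d" for p c
    using D_scl[OF that] D_def by simp
  have D0: "D 0 = 0"
    using D_scl[OF csd_zero, of 0] by (simp add: D_def scl_def zero_fun_def)
  have C2: "pairing d (D phi) (R g) = pairing d phi g" if phi: "phi \<in> Phi" for phi g
  proof -
    have Q: "\<exists>p\<in>Phi. D p = w \<and> pairing d w (R g) = pairing d p g" if "w \<in> vs.span T" for w
      using that
    proof (induction rule: vs.span_induct)
      case base
      show ?case
      proof (rule vs.subspaceI, unfold mem_Collect_eq)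
        show "\<exists>p\<in>Phi. D p = 0 \<and> pairing d 0 (R g) = pairing d p g"
          using csd_zero D0 zK_0 by (intro bexI[of _ 0]) (auto simp: Phi_def)
      next
        fix w1 w2
        assume "\<exists>p\<in>Phi. D p = w1 \<and> pairing d w1 (R g) = pairing d p g"
          "\<exists>p\<in>Phi. D p = w2 \<and> pairing d w2 (R g) = pairing d p g"
        then obtain p1 p2 where p: "p1 \<in> Phi" "D p1 = w1" "pairing d w1 (R g) = pairing d p1 g"
          "p2 \<in> Phi" "D p2 = w2" "pairing d w2 (R g) = pairing d p2 g" by blast
        have c: "p1 \<in> csections_dual d" "p2 \<in> csections_dual d" using p Phi_def by auto
        have "p1 + p2 \<in> Phi" using p c by (auto simp: Phi_def csd_add Dadd zK_add)
        moreover have "D (p1 + p2) = w1 + w2" using p c by (simp add: D_def D_add)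
        moreover have "pairing d (w1 + w2) (R g) = pairing d (p1 + p2) g"
          using p c D_csd[of p1] D_csd[of p2]
          by (simp add: pairing_add1 csd_supp D_def)
        ultimately show "\<exists>p\<in>Phi. D p = w1 + w2 \<and> pairing d (w1 + w2) (R g) = pairing d p g" by blast
      next
        fix c w
        assume "\<exists>p\<in>Phi. D p = w \<and> pairing d w (R g) = pairing d p g"
        then obtain p where p: "p \<in> Phi" "D p = w" "pairing d w (R g) = pairing d p g" by blast
        have pc: "p \<in> csections_dual d" using p Phi_def by auto
        have "scl c p \<in> Phi" using p pc by (auto simp: Phi_def csd_scl Dscl zK_scl)
        moreover have "D (scl c p) = scl c w" using p pc by (simp add: D_def D_scl)
        moreover have "pairing d (scl c w) (R g) = pairing d (scl c p) g"
          using p pc D_csd[of p] by (simp add: pairing_scl1 csd_supp D_def)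
        ultimately show "\<exists>p\<in>Phi. D p = scl c w \<and> pairing d (scl c w) (R g) = pairing d p g" by blast
      qed
    next
      case (step t)
      then show ?case using pre[OF step] C1[OF step] by metis
    qed
    have "D phi \<in> vs.span T" using T(3) phi W_def by auto
    then obtain p where p: "p \<in> Phi" "D p = D phi" "pairing d (D phi) (R g) = pairing d p g"
      using Q by blast
    have "p = phi" using inj p(1,2) phi unfolding inj_on_def Phi_def D_def by blast
    then show ?thesis using p(3) by simp
  qed
  define K' where "K' = K \<union> (\<Union>t\<in>T. supp (pre t))"
  have K'f: "finite K'" unfolding K'_def using K(1) Tf pre csd_supp unfolding Phi_def by auto
  have K'ne: "K' \<noteq> {}" using K(2) K'_def by auto
  have "\<forall>t\<in>T. \<exists>C. C \<ge> 0 \<and> (\<forall>g\<in>sections d. cmod (pairing d (pre t) g) \<le> C * seminorm_K N K' g)"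
  proof
    fix t assume t: "t \<in> T"
    have "pre t \<in> csections_dual d" using pre[OF t] Phi_def by auto
    moreover have "supp (pre t) \<subseteq> K'" using t K'_def by auto
    ultimately show "\<exists>C. C \<ge> 0 \<and> (\<forall>g\<in>sections d. cmod (pairing d (pre t) g) \<le> C * seminorm_K N K' g)"
      using bnd[OF norms _ K'f] by blast
  qed
  from bchoice[OF this] obtain CC where CC0: "\<forall>t\<in>T. CC t \<ge> 0 \<and>
      (\<forall>g\<in>sections d. cmod (pairing d (pre t) g) \<le> CC t * seminorm_K N K' g)"
    by blast
  have CC: "\<And>t. t \<in> T \<Longrightarrow> CC t \<ge> 0"
    "\<And>t g. t \<in> T \<Longrightarrow> g \<in> sections d \<Longrightarrow> cmod (pairing d (pre t) g) \<le> CC t * seminorm_K N K' g"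
    using CC0 by blast+
  define M where "M = (\<Sum>t\<in>T. CC t * seminorm_K N K (uK t))"
  have M0: "M \<ge> 0" unfolding M_def using CC(1) seminorm_nonneg[OF norms uK_sec]
    by (intro sum_nonneg mult_nonneg_nonneg) auto
  define e where "e = 1 / (M + 1)"
  have e0: "e > 0" using M0 e_def by simp
  have eM: "e * M \<le> 1" using M0 by (simp add: e_def field_simps)
  have main: "scale_sec e h \<in> A ` U_ball d N K" if h: "h \<in> U_ball d N K'" for h
  proof -
    have hs: "h \<in> sections d" and h1: "seminorm_K N K' h \<le> 1" using h by (auto simp: U_ball_def)
    define g where "g = scale_sec e h"
    have g_scl: "g = scl (complex_of_real e) h" by (simp add: g_def scale_sec_def scl_def)
    have gs: "g \<in> sections d" using g_scl sections_scl hs by simp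
    have "seminorm_K N K' g = (\<Sum>x\<in>K'. e * N x (h x))"
      unfolding seminorm_K_def g_def scale_sec_def
    proof (intro sum.cong refl)
      fix x
      have "N x (\<lambda>i. complex_of_real e * h x i) = cmod (complex_of_real e) * N x (h x)"
        using hs norm_facts(3)[OF norms] by (simp add: sections_def)
      then show "N x (\<lambda>i. complex_of_real e * h x i) = e * N x (h x)" using e0 by simp
    qed
    also have "\<dots> = e * seminorm_K N K' h" by (simp add: seminorm_K_def sum_distrib_left)
    also have "\<dots> \<le> e" using h1 e0 by simp
    finally have ge: "seminorm_K N K' g \<le> e" .
    define u where "u = R g"
    have us: "u \<in> sections d" using R_sec u_def by simp
    have g's: "g - A u \<in> sections d" using gs us A_sec sections_diff by blast
    have "\<exists>z\<in>sections d. A (zK z) = g - A u"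
    proof (rule solveK[OF g's])
      fix phi assume phi: "phi \<in> csections_dual d" "zK (D phi) = 0"
      then have pP: "phi \<in> Phi" by (simp add: Phi_def)
      interpret l: Vector_Spaces.linear scl "(*)" "pairing d phi" by (rule pairing_linear2)
      have "pairing d phi (g - A u) = pairing d phi g - pairing d phi (A u)" by (rule l.diff)
      also have "pairing d phi (A u) = pairing d (D phi) u" using D_pair[OF phi(1) us] D_def by simp
      also have "\<dots> = pairing d phi g" using C2[OF pP] u_def by simp
      finally show "pairing d phi (g - A u) = 0" by (simp only: diff_self)
    qed
    then obtain z where z: "z \<in> sections d" "A (zK z) = g - A u" by blast
    define f where "f = u + zK z"
    have fs: "f \<in> sections d" using us zK_sec[OF z(1)] sections_add f_def by blast
    have Af: "A f = g" using A_add[OF us zK_sec[OF z(1)]] z(2) f_def by simp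
    have "seminorm_K N K f = seminorm_K N K u"
      unfolding seminorm_K_def f_def by (intro sum.cong refl) (simp add: zK_def plus_fun_def)
    also have "seminorm_K N K u \<le> e * M"
    proof -
      define c where "c t = pairing d (pre t) g" for t
      have ux: "u x = (\<Sum>t\<in>T. (\<lambda>i. c t * uK t x i))" for x
        unfolding u_def R_def c_def by (simp add: sum_apply1 scl_def)
      have Nux: "N x (u x) \<le> (\<Sum>t\<in>T. cmod (c t) * N x (uK t x))" for x
        using norm_sum_le[OF norms Tf, of "\<lambda>t. uK t x" x c] uK_sec ux
        by (auto simp: sections_def)
      have "seminorm_K N K u \<le> (\<Sum>x\<in>K. \<Sum>t\<in>T. cmod (c t) * N x (uK t x))"
        unfolding seminorm_K_def by (intro sum_mono Nux)
      also have "\<dots> = (\<Sum>t\<in>T. cmod (c t) * seminorm_K N K (uK t))"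
        by (simp add: seminorm_K_def sum_distrib_left sum.swap[of _ K])
      also have "\<dots> \<le> (\<Sum>t\<in>T. (CC t * e) * seminorm_K N K (uK t))"
      proof (intro sum_mono mult_right_mono)
        fix t assume t: "t \<in> T"
        have "cmod (c t) \<le> CC t * seminorm_K N K' g" unfolding c_def by (rule CC(2)[OF t gs])
        also have "\<dots> \<le> CC t * e" using ge CC(1)[OF t] by (intro mult_left_mono) auto
        finally show "cmod (c t) \<le> CC t * e" .
        show "0 \<le> seminorm_K N K (uK t)" by (rule seminorm_nonneg[OF norms uK_sec])
      qed
      also have "\<dots> = e * M" by (simp add: M_def sum_distrib_left mult_ac)
      finally show ?thesis .
    qed
    finally have "seminorm_K N K f \<le> 1" using eM by simp
    then have "f \<in> U_ball d N K" using fs by (simp add: U_ball_def)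
    then show ?thesis using Af g_def by (metis image_eqI)
  qed
  show ?thesis using e0 K'f K'ne main by blast
qed

end
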